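(* Let $G=(U,V,E)$ be a finite bipartite graph, $F\subseteq E$, and let $(E_r,E_b)$ be an $(A,B,C)$-free bipartition of the set $E_c$ of committed edges of $G$. Let $E_u=E\setminus E_c$ be the set of uncommitted edges. Then the subgraph $(U,V,E_b\cup E_u)$ of $G$ is a chain graph.
   Context: A chain graph is a bipartite graph with no induced $2K_2$. $\hat{E}=\{uv: u\in U,\ v\in V,\ uv\notin E\}$. Two edges $u_1v_1,u_2v_2\in E$ ($u_i\in U$, $v_i\in V$) are in conflict in $G$ if $u_1v_2\notin E$ and $u_2v_1\notin E$. An edge is committed if it is in conflict with some other edge of $E$, and uncommitted otherwise. A bipartition of $E_c$ is a pair $(E_r,E_b)$ with $E_r\cap E_b=\emptyset$, $E_r\cup E_b=E_c$, $F\cap E_c\subseteq E_b$. It is $(A,B,C)$-free if there are no $u_1,u_2\in U$, $v_1,v_2\in V$ forming: $(A_1)$: $u_1v_1,u_2v_2\in E_r$, $u_1v_2,u_2v_1\in\hat{E}$; $(A_2)$: $u_1v_1,u_2v_2\in E_b$, $u_1v_2,u_2v_1\in\hat{E}$; $(B_1)$: $u_1v_1,u_2v_2\in E_r$, $u_1v_2\in\hat{E}$, $u_2v_1\in E_b$; $(B_2)$: $u_1v_1,u_2v_2\in E_b$, $u_1v_2\in\hat{E}$, $u_2v_1\in E_r$; $(C)$: $u_1v_1,u_2v_2\in E_r$, $u_1v_2\in\hat{E}$, $u_2v_1\in F$. *)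

theory Defs
  imports Main
begin

definition bipartite_graph :: "'a set \<Rightarrow> 'a set \<Rightarrow> ('a \<times> 'a) set \<Rightarrow> bool" where
  "bipartite_graph U V E \<longleftrightarrow> U \<inter> V = {} \<and> E \<subseteq> U \<times> V"

definition non_edges :: "'a set \<Rightarrow> 'a set \<Rightarrow> ('a \<times> 'a) set \<Rightarrow> ('a \<times> 'a) set" where
  "non_edges U V E = {(u,v). u \<in> U \<and> v \<in> V \<and> (u,v) \<notin> E}"

definition chain_graph :: "'a set \<Rightarrow> 'a set \<Rightarrow> ('a \<times> 'a) set \<Rightarrow> bool" where
  "chain_graph U V E \<longleftrightarrow> bipartite_graph U V E \<and>
     \<not> (\<exists>u1\<in>U. \<exists>u2\<in>U. \<exists>v1\<in>V. \<exists>v2\<in>V.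
          (u1,v1) \<in> E \<and> (u2,v2) \<in> E \<and> (u1,v2) \<notin> E \<and> (u2,v1) \<notin> E)"

definition in_conflict :: "('a \<times> 'a) set \<Rightarrow> ('a \<times> 'a) \<Rightarrow> ('a \<times> 'a) \<Rightarrow> bool" where
  "in_conflict E e1 e2 \<longleftrightarrow> e1 \<in> E \<and> e2 \<in> E \<and>
     (fst e1, snd e2) \<notin> E \<and> (fst e2, snd e1) \<notin> E"

definition committed_edges :: "('a \<times> 'a) set \<Rightarrow> ('a \<times> 'a) set" where
  "committed_edges E = {e \<in> E. \<exists>e' \<in> E. e' \<noteq> e \<and> in_conflict E e e'}"

definition uncommitted_edges :: "('a \<times> 'a) set \<Rightarrow> ('a \<times> 'a) set" where
  "uncommitted_edges E = E - committed_edges E"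

definition is_bipartition ::
  "('a \<times> 'a) set \<Rightarrow> ('a \<times> 'a) set \<Rightarrow> ('a \<times> 'a) set \<Rightarrow> ('a \<times> 'a) set \<Rightarrow> bool" where
  "is_bipartition E F Er Eb \<longleftrightarrow> Er \<inter> Eb = {} \<and> Er \<union> Eb = committed_edges E \<and>
     F \<inter> committed_edges E \<subseteq> Eb"

definition ABC_free ::
  "'a set \<Rightarrow> 'a set \<Rightarrow> ('a \<times> 'a) set \<Rightarrow> ('a \<times> 'a) set \<Rightarrow> ('a \<times> 'a) set \<Rightarrow> ('a \<times> 'a) set \<Rightarrow> bool" where
  "ABC_free U V E F Er Eb \<longleftrightarrow>
     is_bipartition E F Er Eb \<and>
     (\<forall>u1\<in>U. \<forall>u2\<in>U. \<forall>v1\<in>V. \<forall>v2\<in>V.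
        let Eh = non_edges U V E in
        \<not> ((u1,v1) \<in> Er \<and> (u2,v2) \<in> Er \<and> (u1,v2) \<in> Eh \<and> (u2,v1) \<in> Eh) \<and>
        \<not> ((u1,v1) \<in> Eb \<and> (u2,v2) \<in> Eb \<and> (u1,v2) \<in> Eh \<and> (u2,v1) \<in> Eh) \<and>
        \<not> ((u1,v1) \<in> Er \<and> (u2,v2) \<in> Er \<and> (u1,v2) \<in> Eh \<and> (u2,v1) \<in> Eb) \<and>
        \<not> ((u1,v1) \<in> Eb \<and> (u2,v2) \<in> Eb \<and> (u1,v2) \<in> Eh \<and> (u2,v1) \<in> Er) \<and>
        \<not> ((u1,v1) \<in> Er \<and> (u2,v2) \<in> Er \<and> (u1,v2) \<in> Eh \<and> (u2,v1) \<in> F))"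

end

theory Submission
  imports Defs
begin

context
  fixes U V :: "'a set" and E F Er Eb :: "('a \<times> 'a) set"
  assumes bg: "bipartite_graph U V E"
    and abc: "ABC_free U V E F Er Eb"
begin

lemma EUV: "(u,v) \<in> E \<Longrightarrow> u \<in> U \<and> v \<in> V"
  using bg unfolding bipartite_graph_def by auto

lemma part: "Er \<inter> Eb = {}" "Er \<union> Eb = committed_edges E"
  using abc unfolding ABC_free_def is_bipartition_def by auto

lemma conf: "(u,v) \<in> E \<Longrightarrow> (s,t) \<in> E \<Longrightarrow> (u,t) \<notin> E \<Longrightarrow> (s,v) \<notin> E
   \<Longrightarrow> (u,v) \<in> Er \<longleftrightarrow> (s,t) \<in> Eb"
proof -
  assume h: "(u,v) \<in> E" "(s,t) \<in> E" "(u,t) \<notin> E" "(s,v) \<notin> E"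
  have ne: "(u,v) \<noteq> (s,t)" using h by auto
  have c1: "(u,v) \<in> committed_edges E" using h ne
    unfolding committed_edges_def in_conflict_def by force
  have c2: "(s,t) \<in> committed_edges E" using h ne
    unfolding committed_edges_def in_conflict_def by force
  have U: "u \<in> U" "s \<in> U" "v \<in> V" "t \<in> V" using h EUV by auto
  have nh: "(u,t) \<in> non_edges U V E" "(s,v) \<in> non_edges U V E"
    using U h unfolding non_edges_def by auto
  have A: "\<not> ((u,v) \<in> Er \<and> (s,t) \<in> Er)" "\<not> ((u,v) \<in> Eb \<and> (s,t) \<in> Eb)"
    using abc U nh unfolding ABC_free_def Let_def by blast+
  show ?thesis using A c1 c2 part by blast
qed

lemma conf2: "(u,v) \<in> E \<Longrightarrow> (s,t) \<in> E \<Longrightarrow> (u,t) \<notin> E \<Longrightarrow> (s,v) \<notin> E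
   \<Longrightarrow> (u,v) \<in> Er \<union> Eb \<and> (s,t) \<in> Er \<union> Eb"
proof -
  assume h: "(u,v) \<in> E" "(s,t) \<in> E" "(u,t) \<notin> E" "(s,v) \<notin> E"
  have ne: "(u,v) \<noteq> (s,t)" using h by auto
  have c1: "(u,v) \<in> committed_edges E" using h ne
    unfolding committed_edges_def in_conflict_def by force
  have c2: "(s,t) \<in> committed_edges E" using h ne
    unfolding committed_edges_def in_conflict_def by force
  show ?thesis using c1 c2 part by blast
qed

lemma B2: "(u1,v1) \<in> Eb \<Longrightarrow> (u2,v2) \<in> Eb \<Longrightarrow> (u1,v2) \<notin> E \<Longrightarrow> (u2,v1) \<in> Er \<Longrightarrow> False"
proof -
  assume h: "(u1,v1) \<in> Eb" "(u2,v2) \<in> Eb" "(u1,v2) \<notin> E" "(u2,v1) \<in> Er"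
  have sub: "Eb \<subseteq> E" using part(2) unfolding committed_edges_def by auto
  have U: "u1 \<in> U" "u2 \<in> U" "v1 \<in> V" "v2 \<in> V" using h sub EUV by blast+
  have nh: "(u1,v2) \<in> non_edges U V E"
    using U h unfolding non_edges_def by auto
  show False using abc U nh h unfolding ABC_free_def Let_def by blast
qed

lemma red_or: "(u,v) \<in> E \<Longrightarrow> (u,v) \<notin> Eb \<union> uncommitted_edges E \<Longrightarrow> (u,v) \<in> Er"
  using part unfolding uncommitted_edges_def by blast

lemma nonred_comm: "(u,v) \<in> committed_edges E \<Longrightarrow> (u,v) \<notin> Er \<Longrightarrow> (u,v) \<in> Eb"
  using part by blast

lemma redE: "e \<in> Er \<Longrightarrow> e \<in> E"
  using part unfolding committed_edges_def by blast

lemma red_partner: "(u,v) \<in> Er \<Longrightarrow> \<exists>x y. (x,y) \<in> E \<and> (u,y) \<notin> E \<and> (x,v) \<notin> E"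
  using part unfolding committed_edges_def in_conflict_def by fastforce

lemma case2:
  assumes a: "(u1,v1) \<in> E" "(u1,v1) \<notin> Er" and b: "(u2,v2) \<in> E" "(u2,v2) \<notin> Er"
    and c: "(u1,v2) \<in> Er" and d: "(u2,v1) \<notin> E"
  shows False
proof -
  obtain x y where xy: "(x,y) \<in> E" "(u1,y) \<notin> E" "(x,v2) \<notin> E" using red_partner[OF c] by blast
  have cE: "(u1,v2) \<in> E" using redE c by blast
  have xyb: "(x,y) \<in> Eb" using conf[OF cE xy(1) xy(2) xy(3)] conf2[OF cE xy(1) xy(2) xy(3)] c by blast
  have u2y: "(u2,y) \<in> E"
  proof (rule ccontr)
    assume "(u2,y) \<notin> E"
    from conf[OF b(1) xy(1) this xy(3)] conf2[OF b(1) xy(1) this xy(3)] conf[OF xy(1) b(1) xy(3) this] conf2[OF xy(1) b(1) xy(3) this] b(2) xyb part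
    show False by blast
  qed
  have xv1: "(x,v1) \<in> E"
  proof (rule ccontr)
    assume "(x,v1) \<notin> E"
    from conf[OF a(1) xy(1) xy(2) this] conf2[OF a(1) xy(1) xy(2) this] conf[OF xy(1) a(1) this xy(2)] conf2[OF xy(1) a(1) this xy(2)] a(2) xyb part
    show False by blast
  qed
  have bb: "(u2,v2) \<in> Eb" using conf[OF xv1 b(1) xy(3) d] conf2[OF xv1 b(1) xy(3) d] b(2) by blast
  have ab: "(u1,v1) \<in> Eb" using conf[OF u2y a(1) d xy(2)] conf2[OF u2y a(1) d xy(2)] a(2) by blast
  show False using B2[OF bb ab d c] .
qed

lemma case3a:
  assumes a: "(u1,v1) \<in> E" "(u1,v1) \<notin> Er" and b: "(u2,v2) \<in> E" "(u2,v2) \<notin> Er"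
    and c: "(u1,v2) \<in> Er" and d: "(u2,v1) \<in> Er"
    and xy: "(x,y) \<in> E" "(u1,y) \<notin> E" "(x,v2) \<notin> E"
    and pq: "(p,q) \<in> E" "(u2,q) \<notin> E" "(p,v1) \<notin> E"
    and r: "(u1,q) \<in> Er" and bl: "(u2,y) \<in> Eb"
  shows False
proof -
  have cE: "(u1,v2) \<in> E" using redE c by blast
  have dE: "(u2,v1) \<in> E" using redE d by blast
  have xyb: "(x,y) \<in> Eb" using conf[OF cE xy(1) xy(2) xy(3)] conf2[OF cE xy(1) xy(2) xy(3)] c by blast
  have pqb: "(p,q) \<in> Eb" using conf[OF dE pq(1) pq(2) pq(3)] conf2[OF dE pq(1) pq(2) pq(3)] d by blast
  have nab: "(u1,v1) \<notin> Eb"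
  proof
    assume "(u1,v1) \<in> Eb"
    from B2[OF this bl xy(2) d] show False .
  qed
  have py: "(p,y) \<notin> E"
  proof
    assume "(p,y) \<in> E"
    from conf[OF a(1) this xy(2) pq(3)] conf2[OF a(1) this xy(2) pq(3)] a(2) nab show False by blast
  qed
  have xq: "(x,q) \<in> E"
  proof (rule ccontr)
    assume "(x,q) \<notin> E"
    from conf[OF xy(1) pq(1) this py] conf2[OF xy(1) pq(1) this py] xyb pqb part show False by blast
  qed
  have bb: "(u2,v2) \<in> Eb" using conf[OF b(1) xq pq(2) xy(3)] conf2[OF b(1) xq pq(2) xy(3)] b(2) xyb part by blast
  have pv2: "(p,v2) \<in> E"
  proof (rule ccontr)
    assume "(p,v2) \<notin> E"
    from conf[OF b(1) pq(1) pq(2) this] conf2[OF b(1) pq(1) pq(2) this] conf[OF pq(1) b(1) this pq(2)] conf2[OF pq(1) b(1) this pq(2)] b(2) pqb part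
    show False by blast
  qed
  have pv2r: "(p,v2) \<in> Er" using conf[OF pv2 xy(1) py xy(3)] conf2[OF pv2 xy(1) py xy(3)] xyb by blast
  show False using B2[OF bb pqb pq(2) pv2r] .
qed

lemma case3:
  assumes a: "(u1,v1) \<in> E" "(u1,v1) \<notin> Er" and b: "(u2,v2) \<in> E" "(u2,v2) \<notin> Er"
    and c: "(u1,v2) \<in> Er" and d: "(u2,v1) \<in> Er"
  shows False
proof -
  obtain x y where xy: "(x,y) \<in> E" "(u1,y) \<notin> E" "(x,v2) \<notin> E" using red_partner[OF c] by blast
  obtain p q where pq: "(p,q) \<in> E" "(u2,q) \<notin> E" "(p,v1) \<notin> E" using red_partner[OF d] by blast
  have cE: "(u1,v2) \<in> E" using redE c by blast
  have dE: "(u2,v1) \<in> E" using redE d by blast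
  have xyb: "(x,y) \<in> Eb" using conf[OF cE xy(1) xy(2) xy(3)] conf2[OF cE xy(1) xy(2) xy(3)] c by blast
  have pqb: "(p,q) \<in> Eb" using conf[OF dE pq(1) pq(2) pq(3)] conf2[OF dE pq(1) pq(2) pq(3)] d by blast
  have u2y: "(u2,y) \<in> E"
  proof (rule ccontr)
    assume "(u2,y) \<notin> E"
    from conf[OF b(1) xy(1) this xy(3)] conf2[OF b(1) xy(1) this xy(3)] conf[OF xy(1) b(1) xy(3) this] conf2[OF xy(1) b(1) xy(3) this] b(2) xyb part
    show False by blast
  qed
  have u1q: "(u1,q) \<in> E"
  proof (rule ccontr)
    assume "(u1,q) \<notin> E"
    from conf[OF a(1) pq(1) this pq(3)] conf2[OF a(1) pq(1) this pq(3)] conf[OF pq(1) a(1) pq(3) this] conf2[OF pq(1) a(1) pq(3) this] a(2) pqb part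
    show False by blast
  qed
  have k: "(u1,q) \<in> Er \<longleftrightarrow> (u2,y) \<in> Eb" using conf[OF u1q u2y xy(2) pq(2)] by blast
  have k2: "(u2,y) \<in> Er \<longleftrightarrow> (u1,q) \<in> Eb" using conf[OF u2y u1q pq(2) xy(2)] by blast
  have cm: "(u1,q) \<in> Er \<or> (u1,q) \<in> Eb"
  proof -
    have "(u1,q) \<noteq> (u2,y)" using xy(2) u2y by auto
    hence "(u1,q) \<in> committed_edges E" using u1q u2y xy(2) pq(2)
      unfolding committed_edges_def in_conflict_def by force
    thus ?thesis using part by blast
  qed
  show False
  proof (cases "(u1,q) \<in> Er")
    case True
    then show False using case3a[OF a b c d xy pq True] k by blast
  next
    case False
    then show False using case3a[OF b a d c pq xy] k2 cm by blast
  qed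
qed

end

theorem lemma4:
  fixes U V :: "'a set" and E F Er Eb :: "('a \<times> 'a) set"
  assumes "finite U" and "finite V"
    and "bipartite_graph U V E"
    and "F \<subseteq> E"
    and "ABC_free U V E F Er Eb"
  shows "chain_graph U V (Eb \<union> uncommitted_edges E)"
proof -
  note bg = assms(3) and abc = assms(5)
  let ?H = "Eb \<union> uncommitted_edges E"
  have HE: "?H \<subseteq> E" using part(2)[OF bg abc]
    unfolding uncommitted_edges_def committed_edges_def by blast
  have nr: "\<And>e. e \<in> ?H \<Longrightarrow> e \<notin> Er" using part[OF bg abc]
    unfolding uncommitted_edges_def by blast
  have "\<not> (\<exists>u1\<in>U. \<exists>u2\<in>U. \<exists>v1\<in>V. \<exists>v2\<in>V.
          (u1,v1) \<in> ?H \<and> (u2,v2) \<in> ?H \<and> (u1,v2) \<notin> ?H \<and> (u2,v1) \<notin> ?H)"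
  proof
    assume "\<exists>u1\<in>U. \<exists>u2\<in>U. \<exists>v1\<in>V. \<exists>v2\<in>V.
          (u1,v1) \<in> ?H \<and> (u2,v2) \<in> ?H \<and> (u1,v2) \<notin> ?H \<and> (u2,v1) \<notin> ?H"
    then obtain u1 u2 v1 v2 where h: "(u1,v1) \<in> ?H" "(u2,v2) \<in> ?H" "(u1,v2) \<notin> ?H" "(u2,v1) \<notin> ?H"
      by blast
    have a: "(u1,v1) \<in> E" "(u1,v1) \<notin> Er" using h HE nr by blast+
    have b: "(u2,v2) \<in> E" "(u2,v2) \<notin> Er" using h HE nr by blast+
    have c: "(u1,v2) \<notin> E \<or> (u1,v2) \<in> Er" using red_or[OF bg abc] h by blast
    have d: "(u2,v1) \<notin> E \<or> (u2,v1) \<in> Er" using red_or[OF bg abc] h by blast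
    show False
    proof (cases "(u1,v2) \<in> Er")
      case cr: True
      show False
      proof (cases "(u2,v1) \<in> Er")
        case True
        show False using case3[OF bg abc a b cr True] .
      next
        case False
        hence "(u2,v1) \<notin> E" using d by blast
        show False using case2[OF bg abc a b cr \<open>(u2,v1) \<notin> E\<close>] .
      qed
    next
      case cn: False
      hence cE: "(u1,v2) \<notin> E" using c by blast
      show False
      proof (cases "(u2,v1) \<in> Er")
        case True
        show False using case2[OF bg abc b a True cE] .
      next
        case False
        hence dE: "(u2,v1) \<notin> E" using d by blast
        have ne: "(u1,v1) \<noteq> (u2,v2)" using cE a(1) by auto
        have "(u2,v2) \<in> committed_edges E" using a(1) b(1) cE dE ne
          unfolding committed_edges_def in_conflict_def by force
        hence "(u2,v2) \<in> Eb" using b(2) part[OF bg abc] by blast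
        thus False using conf[OF bg abc a(1) b(1) cE dE] conf2[OF bg abc a(1) b(1) cE dE] a(2) by blast
      qed
    qed
  qed
  moreover have "bipartite_graph U V ?H" using bg HE unfolding bipartite_graph_def by blast
  ultimately show ?thesis unfolding chain_graph_def by blast
qed

end
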